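(* Let $G$ be a biconnected series-parallel graph without transitive edges, let $(s,t)$ be a separation pair of $G$ and $G'$ a component of $G$ with respect to $(s,t)$. Then $G'$ is heavy if and only if a longest $s$–$t$ path in $G'$ has length (number of edges) at least four.
   Context: A biconnected graph is series-parallel if it contains no subdivision of $K_4$. A separation pair of a biconnected graph $G$ is a pair $(s,t)$ of vertices with $G-s-t$ disconnected; a transitive edge is an edge joining the two vertices of a separation pair. A component w.r.t. $(s,t)$ is the subgraph induced by $s$, $t$ and the vertex set of one connected component of $G-s-t$; vertices other than $s,t$ are internal. A component is heavy if it has an internal vertex adjacent to neither $s$ nor $t$, and light otherwise. *)

theory Defs
  imports Main
begin

definition graph :: "'a set \<Rightarrow> ('a \<times> 'a) set \<Rightarrow> bool" where
  "graph V E \<longleftrightarrow> finite V \<and> E \<subseteq> V \<times> V \<and> sym E \<and> irrefl E"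

definition path_in :: "('a \<times> 'a) set \<Rightarrow> 'a set \<Rightarrow> 'a list \<Rightarrow> bool" where
  "path_in E S p \<longleftrightarrow> p \<noteq> [] \<and> distinct p \<and> set p \<subseteq> S \<and>
     (\<forall>i < length p - 1. (p ! i, p ! Suc i) \<in> E)"

definition connected_on :: "('a \<times> 'a) set \<Rightarrow> 'a set \<Rightarrow> bool" where
  "connected_on E S \<longleftrightarrow> (\<forall>x\<in>S. \<forall>y\<in>S. \<exists>p. path_in E S p \<and> hd p = x \<and> last p = y)"

definition biconnected :: "'a set \<Rightarrow> ('a \<times> 'a) set \<Rightarrow> bool" where
  "biconnected V E \<longleftrightarrow> graph V E \<and> card V \<ge> 3 \<and> connected_on E V \<and>
     (\<forall>v\<in>V. connected_on E (V - {v}))"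

text \<open>G contains a subdivision of K4: four distinct branch vertices b 0..b 3 and six
  paths P i j (i < j) between them that are internally vertex-disjoint and avoid the other
  branch vertices.\<close>
definition has_K4_subdivision :: "'a set \<Rightarrow> ('a \<times> 'a) set \<Rightarrow> bool" where
  "has_K4_subdivision V E \<longleftrightarrow>
     (\<exists>(b :: nat \<Rightarrow> 'a) (P :: nat \<Rightarrow> nat \<Rightarrow> 'a list).
        inj_on b {0..<4} \<and> b ` {0..<4} \<subseteq> V \<and>
        (\<forall>i j. i < j \<and> j < 4 \<longrightarrow>
            path_in E V (P i j) \<and> hd (P i j) = b i \<and> last (P i j) = b j \<and>
            set (P i j) \<inter> b ` {0..<4} = {b i, b j}) \<and>
        (\<forall>i j k l. i < j \<and> j < 4 \<and> k < l \<and> l < 4 \<and> (i, j) \<noteq> (k, l) \<longrightarrow>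
            set (P i j) \<inter> set (P k l) \<subseteq> b ` {0..<4}))"

definition series_parallel :: "'a set \<Rightarrow> ('a \<times> 'a) set \<Rightarrow> bool" where
  "series_parallel V E \<longleftrightarrow> biconnected V E \<and> \<not> has_K4_subdivision V E"

definition separation_pair :: "'a set \<Rightarrow> ('a \<times> 'a) set \<Rightarrow> 'a \<Rightarrow> 'a \<Rightarrow> bool" where
  "separation_pair V E s t \<longleftrightarrow> s \<in> V \<and> t \<in> V \<and> s \<noteq> t \<and> \<not> connected_on E (V - {s, t})"

definition transitive_edge :: "'a set \<Rightarrow> ('a \<times> 'a) set \<Rightarrow> 'a \<Rightarrow> 'a \<Rightarrow> bool" where
  "transitive_edge V E s t \<longleftrightarrow> (s, t) \<in> E \<and> separation_pair V E s t"

definition conn_component :: "('a \<times> 'a) set \<Rightarrow> 'a set \<Rightarrow> 'a set \<Rightarrow> bool" where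
  "conn_component E S C \<longleftrightarrow> C \<subseteq> S \<and> C \<noteq> {} \<and> connected_on E C \<and>
     (\<forall>x\<in>C. \<forall>y\<in>S. (x, y) \<in> E \<longrightarrow> y \<in> C)"

text \<open>W is the vertex set of a component w.r.t. (s,t); the component itself is the
  subgraph induced by W, i.e. (W, E \<inter> W \<times> W).\<close>
definition component :: "'a set \<Rightarrow> ('a \<times> 'a) set \<Rightarrow> 'a \<Rightarrow> 'a \<Rightarrow> 'a set \<Rightarrow> bool" where
  "component V E s t W \<longleftrightarrow> (\<exists>C. conn_component E (V - {s, t}) C \<and> W = {s, t} \<union> C)"

definition heavy :: "('a \<times> 'a) set \<Rightarrow> 'a \<Rightarrow> 'a \<Rightarrow> 'a set \<Rightarrow> bool" where
  "heavy E s t W \<longleftrightarrow> (\<exists>v \<in> W - {s, t}. (v, s) \<notin> E \<and> (v, t) \<notin> E)"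

definition longest_path_length :: "('a \<times> 'a) set \<Rightarrow> 'a set \<Rightarrow> 'a \<Rightarrow> 'a \<Rightarrow> nat" where
  "longest_path_length F W s t =
     Max {length p - 1 | p. path_in F W p \<and> hd p = s \<and> last p = t}"

end

theory Submission
  imports Defs
begin

definition pth :: "('a \<times> 'a) set \<Rightarrow> 'a set \<Rightarrow> 'a list \<Rightarrow> bool" where
  "pth E S p \<longleftrightarrow> p \<noteq> [] \<and> distinct p \<and> set p \<subseteq> S \<and> successively (\<lambda>x y. (x, y) \<in> E) p"

lemma path_in_pth: "path_in E S p = pth E S p"
  unfolding path_in_def pth_def successively_conv_nth by auto

lemma pth_mono: "pth E S p \<Longrightarrow> S \<subseteq> T \<Longrightarrow> pth E T p"
  unfolding pth_def by auto

lemma pth_restrict: "pth E S p \<Longrightarrow> pth (E \<inter> S \<times> S) S p"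
  unfolding pth_def by (auto elim!: successively_mono)

lemma pth_single[simp]: "pth E S [x] \<longleftrightarrow> x \<in> S"
  unfolding pth_def by auto

lemma pth_Cons: "pth E S (x # p) \<longleftrightarrow> x \<in> S \<and> x \<notin> set p \<and> (p = [] \<or> (pth E S p \<and> (x, hd p) \<in> E))"
  unfolding pth_def by (cases p) auto

lemma pth_append: "pth E S (p @ q) \<longleftrightarrow>
   (p = [] \<and> pth E S q) \<or> (q = [] \<and> pth E S p) \<or>
   (pth E S p \<and> pth E S q \<and> set p \<inter> set q = {} \<and> (last p, hd q) \<in> E)"
  unfolding pth_def by (auto simp: successively_append_iff)

lemma pth_rev: "sym E \<Longrightarrow> pth E S (rev p) \<longleftrightarrow> pth E S p"
  unfolding pth_def by (auto simp: sym_def elim!: successively_mono)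

lemma pth_suffix: "pth E S (xs @ ys) \<Longrightarrow> ys \<noteq> [] \<Longrightarrow> pth E S ys"
  by (auto simp: pth_append)
lemma pth_prefix: "pth E S (xs @ ys) \<Longrightarrow> xs \<noteq> [] \<Longrightarrow> pth E S xs"
  by (auto simp: pth_append)
lemma pth_join: "pth E S (xs @ ys) \<Longrightarrow> xs \<noteq> [] \<Longrightarrow> ys \<noteq> [] \<Longrightarrow> (last xs, hd ys) \<in> E"
  by (auto simp: pth_append)

lemma pth_hd: "pth E S p \<Longrightarrow> hd p \<in> set p"
  unfolding pth_def by auto
lemma pth_last: "pth E S p \<Longrightarrow> last p \<in> set p"
  unfolding pth_def by auto

lemma first_hit:
  "pth E S R \<Longrightarrow> hd R \<notin> X \<Longrightarrow> last R \<in> X \<Longrightarrow>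
   \<exists>Q y. pth E (S - X) Q \<and> hd Q = hd R \<and> y \<in> X \<and> y \<in> set R \<and> (last Q, y) \<in> E \<and> set Q \<subseteq> set R"
proof (induction R)
  case Nil
  then show ?case by (simp add: pth_def)
next
  case (Cons a R)
  then have R: "R \<noteq> []" by auto
  show ?case
  proof (cases "hd R \<in> X")
    case True
    then show ?thesis using Cons.prems R
      by (intro exI[of _ "[a]"] exI[of _ "hd R"]) (auto simp: pth_Cons)
  next
    case False
    have pR: "pth E S R" using Cons.prems R by (simp add: pth_Cons)
    from Cons.IH[OF pR False] Cons.prems R obtain Q y where
      Q: "pth E (S - X) Q" "hd Q = hd R" "y \<in> X" "y \<in> set R" "(last Q, y) \<in> E" "set Q \<subseteq> set R"
      by auto
    have "Q \<noteq> []" using Q(1) by (simp add: pth_def)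
    then show ?thesis using Q Cons.prems R
      by (intro exI[of _ "a # Q"] exI[of _ y]) (auto simp: pth_Cons)
  qed
qed

definition closed_in :: "('a \<times> 'a) set \<Rightarrow> 'a set \<Rightarrow> 'a set \<Rightarrow> bool" where
  "closed_in E U C \<longleftrightarrow> (\<forall>a\<in>C. \<forall>b\<in>U. (a, b) \<in> E \<longrightarrow> b \<in> C)"

lemma closed_stay:
  assumes "sym E" "closed_in E U C" "pth E U q"
  shows "\<forall>x\<in>set q. x \<in> C \<longleftrightarrow> hd q \<in> C"
  using assms(3)
proof (induction q)
  case Nil then show ?case by simp
next
  case (Cons a q)
  show ?case
  proof (cases "q = []")
    case True then show ?thesis by simp
  next
    case False
    then have "pth E U q" "(a, hd q) \<in> E" "a \<in> U" using Cons.prems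
      by (auto simp: pth_Cons)
    moreover then have "hd q \<in> U" using pth_hd[of E U q] by (auto simp: pth_def)
    moreover have "(hd q, a) \<in> E" using assms(1) calculation(2) by (auto simp: sym_def)
    ultimately have "a \<in> C \<longleftrightarrow> hd q \<in> C" using assms(2) unfolding closed_in_def by blast
    then show ?thesis using Cons.IH \<open>pth E U q\<close> by auto
  qed
qed


definition fan :: "('a \<times> 'a) set \<Rightarrow> 'a set \<Rightarrow> 'a \<Rightarrow> 'a \<Rightarrow> 'a \<Rightarrow> bool" where
  "fan E U s t u \<longleftrightarrow> (\<exists>P Q. pth E U P \<and> pth E U Q \<and> hd P = u \<and> hd Q = u \<and>
      (last P, s) \<in> E \<and> (last Q, t) \<in> E \<and> set P \<inter> set Q = {u})"

lemma fan_sym: "fan E U s t u \<Longrightarrow> fan E U t s u"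
  unfolding fan_def by blast

lemma conn_pth: "connected_on E S \<Longrightarrow> x \<in> S \<Longrightarrow> y \<in> S \<Longrightarrow> \<exists>p. pth E S p \<and> hd p = x \<and> last p = y"
  unfolding connected_on_def path_in_pth by blast

lemma fan_base:
  assumes "connected_on E (V - {s})" "U = V - {s, t}" "u \<in> U" "t \<in> V" "(u, s) \<in> E" "s \<noteq> t"
  shows "fan E U s t u"
proof -
  obtain R where R: "pth E (V - {s}) R" "hd R = u" "last R = t"
    using conn_pth[OF assms(1), of u t] assms by auto
  obtain Q y where Q: "pth E (V - {s} - {t}) Q" "hd Q = u" "y \<in> {t}" "(last Q, y) \<in> E"
    using first_hit[OF R(1), of "{t}"] R assms by auto
  have UU: "V - {s} - {t} = U" using assms(2) by auto
  have f: "pth E U [u]" "pth E U Q" "hd [u] = u" "hd Q = u" "(last [u], s) \<in> E" "(last Q, t) \<in> E"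
    "set [u] \<inter> set Q = {u}" using Q assms(3,5) pth_hd[OF Q(1)] unfolding UU by auto
  then show ?thesis unfolding fan_def by blast
qed

lemma stepA:
  assumes "sym E" "pth E U A" "pth E U B" "hd A = u'" "hd B = u'" "set A \<inter> set B = {u'}"
    "(last A, s) \<in> E" "(last B, t) \<in> E" "u \<in> set A" "u \<noteq> u'"
  shows "fan E U s t u"
proof -
  obtain B' where B: "B = u' # B'" using assms(3,5) by (cases B) (auto simp: pth_def)
  obtain A1 A2 where A12: "A = A1 @ u # A2" using assms(9) split_list by metis
  obtain A1' where A1: "A1 = u' # A1'" using A12 assms(4,10) by (cases A1) auto
  have A: "A = u' # A1' @ u # A2" using A12 A1 by simp
  define P where "P = u # A2"
  define Q where "Q = u # rev A1' @ B"
  have pA: "pth E U (u' # A1' @ u # A2)" using assms(2) A by simp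
  have pB: "pth E U (u' # B')" using assms(3) B by simp
  have dis: "set (u' # A1' @ u # A2) \<inter> set (u' # B') = {u'}" using assms(6) A B by simp
  have "pth E U P" using pth_suffix[of E U "u' # A1'" "u # A2"] pA unfolding P_def by simp
  moreover have "pth E U Q"
  proof -
    have e1: "(last (u' # A1'), u) \<in> E" using pth_join[of E U "u' # A1'" "u # A2"] pA by simp
    have e2: "(u, last (u' # A1')) \<in> E" using e1 assms(1) by (auto simp: sym_def)
    have "(u, hd (rev A1' @ B)) \<in> E" using e2 B by (cases A1' rule: rev_cases) auto
    moreover have "pth E U (rev A1' @ B)"
    proof (cases "A1' = []")
      case True then show ?thesis using assms(3) by simp
    next
      case False
      have p1: "pth E U (u' # A1')" using pth_prefix[of E U "u' # A1'" "u # A2"] pA by simp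
      then have "pth E U A1'" "(u', hd A1') \<in> E" using False by (auto simp: pth_Cons)
      moreover have "set A1' \<inter> set B = {}" using dis p1 B by (auto simp: pth_Cons)
      moreover have "(hd A1', u') \<in> E" using calculation(2) assms(1) by (auto simp: sym_def)
      ultimately show ?thesis using False assms(1,3) B
        by (auto simp: pth_append pth_rev last_rev)
    qed
    moreover have "u \<notin> set (rev A1' @ B)" using pA dis assms(10) B unfolding pth_def by auto
    moreover have "u \<in> U" using pA unfolding pth_def by auto
    ultimately show ?thesis unfolding Q_def by (simp add: pth_Cons)
  qed
  moreover have "last P = last A" unfolding P_def A by simp
  moreover have "last Q = last B" unfolding Q_def B by simp
  moreover have "set P \<inter> set Q = {u}"
  proof -
    have d1: "distinct (u' # A1' @ u # A2)" using pA by (simp add: pth_def)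
    have i3: "set A2 \<inter> set A1' = {}" "u' \<notin> set A2" "u \<notin> set A2" using d1 by auto
    have "set A2 \<inter> set B' \<subseteq> set (u' # A1' @ u # A2) \<inter> set (u' # B')" by auto
    then have "set A2 \<inter> set B' \<subseteq> {u'}" unfolding dis .
    then have i1: "set A2 \<inter> set B' = {}" using i3(2) by auto
    have i2: "u \<notin> set B'"
    proof
      assume "u \<in> set B'"
      then have "u \<in> set (u' # A1' @ u # A2) \<inter> set (u' # B')" by simp
      then show False using dis assms(10) by simp
    qed
    have e1: "set P = insert u (set A2)" by (simp add: P_def)
    have e2: "set Q = insert u (insert u' (set A1' \<union> set B'))" by (auto simp: Q_def B)
    have "set A2 \<inter> insert u (insert u' (set A1' \<union> set B')) = {}" using i1 i3 by blast
    then show ?thesis unfolding e1 e2 by blast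
  qed
  moreover have "hd P = u" "hd Q = u" by (simp_all add: P_def Q_def)
  ultimately have f: "pth E U P" "pth E U Q" "(last P, s) \<in> E" "(last Q, t) \<in> E"
    "set P \<inter> set Q = {u}" "hd P = u" "hd Q = u" using assms(7,8) by simp_all
  show ?thesis unfolding fan_def using f by blast
qed

lemma stepHit:
  assumes "pth E U A" "pth E U B" "hd A = u'" "hd B = u'" "set A \<inter> set B = {u'}"
    "(last A, s) \<in> E" "(last B, t) \<in> E" "u \<in> U" "u \<notin> set A \<union> set B" "(u, u') \<in> E"
    "pth E U Q0" "hd Q0 = u" "set Q0 \<inter> (set A \<union> set B) = {}" "(last Q0, y) \<in> E"
    "y \<in> set A \<or> y = s" "y \<noteq> u'"
  shows "fan E U s t u"
proof -
  obtain B' where B: "B = u' # B'" using assms(2,4) by (cases B) (auto simp: pth_def)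
  have QB: "pth E U (u # B)" using assms(2,8,9,10) B by (simp add: pth_Cons)
  show ?thesis
  proof (cases "y = s")
    case True
    have s4: "u \<in> set Q0" using pth_hd[OF assms(11)] assms(12) by simp
    have "set Q0 \<inter> set (u # B) = {u}" using s4 assms(13) by auto
    moreover have "hd (u # B) = u" "last (u # B) = last B" using B by simp_all
    moreover have "(last Q0, s) \<in> E" using True assms(14) by simp
    ultimately have f: "set Q0 \<inter> set (u # B) = {u}" "hd (u # B) = u" "(last (u # B), t) \<in> E"
      "(last Q0, s) \<in> E" using assms(7) by simp_all
    show ?thesis unfolding fan_def using QB f assms(11,12) by blast
  next
    case False
    then have "y \<in> set A" using assms(15) by auto
    then obtain A1 A2 where A12: "A = A1 @ y # A2" using split_list by metis
    obtain A1' where A1: "A1 = u' # A1'" using A12 assms(3,16) by (cases A1) auto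
    have AA: "A = u' # A1' @ y # A2" using A12 A1 by simp
    have pA: "pth E U (u' # A1' @ y # A2)" using assms(1) unfolding AA .
    have dis: "set (u' # A1' @ y # A2) \<inter> set (u' # B') = {u'}" using assms(5) unfolding AA B .
    have pY: "pth E U (y # A2)" using pth_suffix[of E U "u' # A1'" "y # A2"] pA by simp
    have "set Q0 \<inter> set (y # A2) = {}" using assms(13) A12 by auto
    then have pP: "pth E U (Q0 @ y # A2)" unfolding pth_append using assms(11,14) pY
      by simp
    have "set (Q0 @ y # A2) \<inter> set (u # B) = {u}"
    proof -
      have d1: "distinct (u' # A1' @ y # A2)" using pA by (simp add: pth_def)
      have s1a: "u' \<notin> set (y # A2)" using d1 by simp
      have s1b: "set (y # A2) \<subseteq> set A" unfolding AA by (intro subsetI) (simp, elim disjE; simp)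
      have s1: "set (y # A2) \<subseteq> set A - {u'}" using s1a s1b by blast
      have s2: "(set A - {u'}) \<inter> set B = {}" using assms(5) by blast
      have s3: "set Q0 \<inter> set B = {}" using assms(13) by blast
      have s4: "u \<in> set Q0" using pth_hd[OF assms(11)] assms(12) by simp
      have s5: "u \<notin> set A" "u \<notin> set B" using assms(9) by auto
      have e1: "set (Q0 @ y # A2) = set Q0 \<union> set (y # A2)" by simp
      have e2: "set (u # B) = insert u (set B)" by simp
      show ?thesis unfolding e1 e2 using s1 s2 s3 s4 s5 by blast
    qed
    moreover have "last (Q0 @ y # A2) = last A" using A12 by simp
    moreover have "hd (Q0 @ y # A2) = u" using assms(11,12) by (auto simp: pth_def)
    moreover have "hd (u # B) = u" "last (u # B) = last B" using B by simp_all
    ultimately have f: "set (Q0 @ y # A2) \<inter> set (u # B) = {u}" "(last (Q0 @ y # A2), s) \<in> E"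
      "hd (Q0 @ y # A2) = u" "hd (u # B) = u" "(last (u # B), t) \<in> E" using assms(6,7) by simp_all
    show ?thesis unfolding fan_def using QB pP f by blast
  qed
qed


lemma fan_exists:
  assumes symE: "sym E" and conn: "\<forall>x\<in>V. connected_on E (V - {x})"
    and st: "s \<in> V" "t \<in> V" "s \<noteq> t" and UV: "U = V - {s, t}"
  shows "pth E U p \<Longrightarrow> (last p, s) \<in> E \<or> (last p, t) \<in> E \<Longrightarrow> fan E U s t (hd p)"
proof (induction p)
  case Nil
  then show ?case by (simp add: pth_def)
next
  case (Cons u p)
  have uU: "u \<in> U" using Cons.prems(1) by (simp add: pth_Cons)
  show ?case
  proof (cases "p = []")
    case True
    then have "(u, s) \<in> E \<or> (u, t) \<in> E" using Cons.prems(2) by simp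
    then show ?thesis
    proof
      assume "(u, s) \<in> E"
      then show ?thesis using fan_base[of E V s U t u] conn st UV uU by simp
    next
      assume "(u, t) \<in> E"
      moreover have "U = V - {t, s}" using UV by auto
      ultimately have "fan E U t s u" using fan_base[of E V t U s u] conn st uU by simp
      then have "fan E U s t u" by (rule fan_sym)
      then show ?thesis by simp
    qed
  next
    case False
    have pp: "pth E U p" "(u, hd p) \<in> E" "u \<notin> set p" using Cons.prems(1) False by (simp_all add: pth_Cons)
    have "last (u # p) = last p" using False by simp
    then have "fan E U s t (hd p)" using Cons.IH pp Cons.prems(2) by simp
    then obtain A B where AB: "pth E U A" "pth E U B" "hd A = hd p" "hd B = hd p"
      "(last A, s) \<in> E" "(last B, t) \<in> E" "set A \<inter> set B = {hd p}"
      unfolding fan_def by blast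
    define u' where "u' = hd p"
    have uu': "u \<noteq> u'" using pp(3) pth_hd[OF pp(1)] unfolding u'_def by auto
    have u'U: "u' \<in> U" using pth_hd[OF pp(1)] pp(1) unfolding u'_def pth_def by auto
    have "fan E U s t u"
    proof (cases "u \<in> set A")
      case True
      show ?thesis using stepA[OF symE AB(1,2) AB(3,4)[folded u'_def] AB(7)[folded u'_def] AB(5,6) True uu'] .
    next
      case notA: False
      show ?thesis
      proof (cases "u \<in> set B")
        case True
        have "set B \<inter> set A = {u'}" using AB(7) unfolding u'_def by blast
        then have "fan E U t s u"
          using stepA[OF symE AB(2,1) AB(4,3)[folded u'_def] _ AB(6,5) True uu'] by blast
        then show ?thesis by (rule fan_sym)
      next
        case notB: False
        have u'V: "u' \<in> V" using u'U UV by blast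
        have uV: "u \<in> V - {u'}" "s \<in> V - {u'}" using uU u'U UV uu' st by auto
        obtain R where R: "pth E (V - {u'}) R" "hd R = u" "last R = s"
          using conn_pth[OF conn[rule_format, OF u'V] uV] by blast
        define X where "X = set A \<union> set B \<union> {s, t}"
        have "hd R \<notin> X" using R(2) notA notB uU UV unfolding X_def by auto
        moreover have "last R \<in> X" using R(3) unfolding X_def by auto
        ultimately obtain Q0 y where Q0: "pth E (V - {u'} - X) Q0" "hd Q0 = u" "y \<in> X" "y \<in> set R"
          "(last Q0, y) \<in> E"
          using first_hit[OF R(1), of X] R(2) by metis
        have yu': "y \<noteq> u'" using Q0(4) R(1) unfolding pth_def by auto
        have Q0U: "pth E U Q0" using Q0(1) by (rule pth_mono) (auto simp: X_def UV)
        have Q0X: "set Q0 \<inter> (set A \<union> set B) = {}" using Q0(1) unfolding pth_def X_def by auto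
        have AB': "hd A = u'" "hd B = u'" "set A \<inter> set B = {u'}" using AB(3,4,7) unfolding u'_def by auto
        have uAB: "u \<notin> set A \<union> set B" using notA notB by blast
        have uu'E: "(u, u') \<in> E" using pp(2) unfolding u'_def .
        show ?thesis
        proof (cases "y \<in> set A \<or> y = s")
          case True
          show ?thesis using stepHit[OF AB(1,2) AB'(1,2,3) AB(5,6) uU uAB uu'E Q0U Q0(2) Q0X Q0(5) True yu'] .
        next
          case False
          then have yB: "y \<in> set B \<or> y = t" using Q0(3) unfolding X_def by auto
          have AB'': "set B \<inter> set A = {u'}" using AB'(3) by blast
          have "fan E U t s u"
            using stepHit[OF AB(2,1) AB'(2,1) AB'' AB(6,5) uU _ uu'E Q0U Q0(2) _ Q0(5) yB yu'] uAB Q0X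
            by blast
          then show ?thesis by (rule fan_sym)
        qed
      qed
    qed
    then show ?thesis by simp
  qed
qed


lemma pairs6: "i < j \<Longrightarrow> j < (4::nat) \<Longrightarrow>
  (i = 0 \<and> j = 1) \<or> (i = 0 \<and> j = 2) \<or> (i = 0 \<and> j = 3) \<or> (i = 1 \<and> j = 2) \<or> (i = 1 \<and> j = 3) \<or> (i = 2 \<and> j = 3)"
  by presburger

lemma K4_generic:
  assumes dist: "distinct [a, b, c, d]" and inV: "{a, b, c, d} \<subseteq> V"
    and pab: "pth E V pab" "hd pab = a" "last pab = b" "set pab \<subseteq> {a, b} \<union> iab"
    and pac: "pth E V pac" "hd pac = a" "last pac = c" "set pac \<subseteq> {a, c} \<union> iac"
    and pad: "pth E V pad" "hd pad = a" "last pad = d" "set pad \<subseteq> {a, d} \<union> iad"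
    and pbc: "pth E V pbc" "hd pbc = b" "last pbc = c" "set pbc \<subseteq> {b, c} \<union> ibc"
    and pbd: "pth E V pbd" "hd pbd = b" "last pbd = d" "set pbd \<subseteq> {b, d} \<union> ibd"
    and pcd: "pth E V pcd" "hd pcd = c" "last pcd = d" "set pcd \<subseteq> {c, d} \<union> icd"
    and d1: "iab \<inter> iac = {}" "iab \<inter> iad = {}" "iab \<inter> ibc = {}" "iab \<inter> ibd = {}" "iab \<inter> icd = {}"
    and d2: "iac \<inter> iad = {}" "iac \<inter> ibc = {}" "iac \<inter> ibd = {}" "iac \<inter> icd = {}"
    and d3: "iad \<inter> ibc = {}" "iad \<inter> ibd = {}" "iad \<inter> icd = {}"
    and d4: "ibc \<inter> ibd = {}" "ibc \<inter> icd = {}" "ibd \<inter> icd = {}"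
    and db: "iab \<inter> {a,b,c,d} = {}" "iac \<inter> {a,b,c,d} = {}" "iad \<inter> {a,b,c,d} = {}"
      "ibc \<inter> {a,b,c,d} = {}" "ibd \<inter> {a,b,c,d} = {}" "icd \<inter> {a,b,c,d} = {}"
  shows "has_K4_subdivision V E"
proof -
  define bv where "bv = (\<lambda>i::nat. [a, b, c, d] ! i)"
  define P where "P = (\<lambda>(i::nat) (j::nat). if i = 0 \<and> j = 1 then pab else if i = 0 \<and> j = 2 then pac else
     if i = 0 \<and> j = 3 then pad else if i = 1 \<and> j = 2 then pbc else if i = 1 \<and> j = 3 then pbd else pcd)"
  define I where "I = (\<lambda>(i::nat) (j::nat). if i = 0 \<and> j = 1 then iab else if i = 0 \<and> j = 2 then iac else
     if i = 0 \<and> j = 3 then iad else if i = 1 \<and> j = 2 then ibc else if i = 1 \<and> j = 3 then ibd else icd)"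
  have r4: "{0..<4::nat} = {0, 1, 2, 3}" by auto
  have B: "bv ` {0..<4} = {a, b, c, d}" unfolding r4 by (simp add: bv_def)
  have bvB: "bv x \<in> {a, b, c, d}" if "x < 4" for x :: nat
  proof -
    from that have "x \<in> {0..<4}" by simp
    then have "bv x \<in> bv ` {0..<4}" by (rule imageI)
    then show ?thesis using B by simp
  qed
  have inj: "inj_on bv {0..<4}" unfolding r4 inj_on_def using dist by (auto simp: bv_def)
  have H1: "pth E V (P i j) \<and> hd (P i j) = bv i \<and> last (P i j) = bv j \<and> set (P i j) \<subseteq> {bv i, bv j} \<union> I i j"
    if "i < j" "j < 4" for i j
    using pairs6[OF that] pab pac pad pbc pbd pcd by (elim disjE) (simp_all add: P_def I_def bv_def)
  have H3: "I i j \<inter> {a, b, c, d} = {}" if "i < j" "j < 4" for i j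
    using pairs6[OF that] db by (elim disjE) (simp_all add: I_def)
  have dd: "iac \<inter> iab = {}" "iad \<inter> iab = {}" "ibc \<inter> iab = {}" "ibd \<inter> iab = {}" "icd \<inter> iab = {}"
    "iad \<inter> iac = {}" "ibc \<inter> iac = {}" "ibd \<inter> iac = {}" "icd \<inter> iac = {}"
    "ibc \<inter> iad = {}" "ibd \<inter> iad = {}" "icd \<inter> iad = {}"
    "ibd \<inter> ibc = {}" "icd \<inter> ibc = {}" "icd \<inter> ibd = {}"
    using d1 d2 d3 d4 by (simp_all add: Int_commute)
  have H2: "I i j \<inter> I k l = {}" if "i < j" "j < 4" "k < l" "l < 4" "(i, j) \<noteq> (k, l)" for i j k l
    using pairs6[OF that(1,2)] pairs6[OF that(3,4)] that(5) d1 d2 d3 d4 dd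
    by (elim disjE) (simp_all add: I_def)
  show ?thesis unfolding has_K4_subdivision_def
  proof (intro exI[of _ bv] exI[of _ P] conjI allI impI)
    show "inj_on bv {0..<4}" by (rule inj)
    show "bv ` {0..<4} \<subseteq> V" using B inV by simp
  next
    fix i j :: nat assume ij: "i < j \<and> j < 4"
    note h = H1[OF ij[THEN conjunct1] ij[THEN conjunct2]]
    note h3 = H3[OF ij[THEN conjunct1] ij[THEN conjunct2]]
    show "path_in E V (P i j)" using h by (simp add: path_in_pth)
    show "hd (P i j) = bv i" using h by simp
    show "last (P i j) = bv j" using h by simp
    have "bv i \<in> set (P i j)" "bv j \<in> set (P i j)" using h pth_hd[of E V "P i j"] pth_last[of E V "P i j"] by auto
    moreover have "bv i \<in> {a,b,c,d}" "bv j \<in> {a,b,c,d}" using ij bvB by simp_all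
    ultimately show "set (P i j) \<inter> bv ` {0..<4} = {bv i, bv j}" unfolding B using h h3 by blast
  next
    fix i j k l :: nat assume ijkl: "i < j \<and> j < 4 \<and> k < l \<and> l < 4 \<and> (i, j) \<noteq> (k, l)"
    then have "I i j \<inter> I k l = {}" using H2 by blast
    moreover have "set (P i j) \<subseteq> {bv i, bv j} \<union> I i j" "set (P k l) \<subseteq> {bv k, bv l} \<union> I k l"
      using H1 ijkl by blast+
    moreover have "bv i \<in> {a,b,c,d}" "bv j \<in> {a,b,c,d}" "bv k \<in> {a,b,c,d}" "bv l \<in> {a,b,c,d}"
      using ijkl bvB by simp_all
    ultimately show "set (P i j) \<inter> set (P k l) \<subseteq> bv ` {0..<4}" unfolding B by blast
  qed
qed


lemma pth_mid: "pth E S (xs @ ys @ zs) \<Longrightarrow> ys \<noteq> [] \<Longrightarrow> pth E S ys"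
  by (metis append.assoc pth_prefix pth_suffix)

lemma pth_edge: "pth E S [x, y] \<longleftrightarrow> x \<in> S \<and> y \<in> S \<and> x \<noteq> y \<and> (x, y) \<in> E"
  by (auto simp: pth_Cons)

lemma pth_wrap:
  assumes "pth E U Ob" "s \<notin> U" "t \<notin> U" "s \<noteq> t" "(s, hd Ob) \<in> E" "(last Ob, t) \<in> E" "U \<subseteq> V" "s \<in> V" "t \<in> V"
  shows "pth E V (s # Ob @ [t])"
proof -
  have "pth E V Ob" using assms(1,7) by (rule pth_mono)
  moreover have "s \<notin> set Ob" "t \<notin> set Ob" using assms(1,2,3) by (auto simp: pth_def)
  moreover have "Ob \<noteq> []" using assms(1) by (simp add: pth_def)
  ultimately show ?thesis using assms(4,5,6,8,9)
    by (auto simp: pth_Cons pth_append)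
qed

lemma crossing:
  assumes symE: "sym E" and noK4: "\<not> has_K4_subdivision V E"
    and st: "s \<in> V" "t \<in> V" "s \<noteq> t" and UV: "U = V - {s, t}" and CU: "C \<subseteq> U"
    and Ob: "pth E U Ob" "set Ob \<inter> C = {}" "(s, hd Ob) \<in> E" "(last Ob, t) \<in> E"
    and q: "pth E V (s # p1 @ va # p2 @ vb # p3 @ [t])" and qC: "set (p1 @ va # p2 @ vb # p3) \<subseteq> C"
    and ea: "(va, t) \<in> E" and eb: "(vb, s) \<in> E"
  shows False
proof -
  have D: "distinct (s # p1 @ va # p2 @ vb # p3 @ [t])" using q by (simp add: pth_def)
  have pab: "pth E V (s # p1 @ [va])"
    using pth_prefix[of E V "s # p1 @ [va]" "p2 @ vb # p3 @ [t]"] q by simp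
  have pbc: "pth E V (va # p2 @ [vb])"
    using pth_mid[of E V "s # p1" "va # p2 @ [vb]" "p3 @ [t]"] q by simp
  have pcd: "pth E V (vb # p3 @ [t])"
    using pth_suffix[of E V "s # p1 @ va # p2" "vb # p3 @ [t]"] q by simp
  have inC: "va \<in> C" "vb \<in> C" using qC by auto
  have sC: "s \<notin> C" "t \<notin> C" using CU UV by auto
  have Vs: "va \<in> V" "vb \<in> V" using inC CU UV by auto
  have svb: "s \<noteq> vb" "va \<noteq> t" using D by auto
  have pac: "pth E V [s, vb]" using st Vs svb eb symE by (auto simp: pth_edge sym_def)
  have pbd: "pth E V [va, t]" using st Vs svb ea by (auto simp: pth_edge)
  have pad: "pth E V (s # Ob @ [t])" using pth_wrap[OF Ob(1) _ _ st(3) Ob(3,4) _ st(1,2)] UV by auto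
  have OU: "set Ob \<subseteq> U" using Ob(1) by (simp add: pth_def)
  have Oq: "set Ob \<inter> set (p1 @ va # p2 @ vb # p3) = {}" using Ob(2) qC by blast
  have Ost: "s \<notin> set Ob" "t \<notin> set Ob" using OU UV by auto
  show False
  proof (rule notE[OF noK4], rule K4_generic[where a = s and b = va and c = vb and d = t and
        pab = "s # p1 @ [va]" and iab = "set p1" and pac = "[s, vb]" and iac = "{}" and
        pad = "s # Ob @ [t]" and iad = "set Ob" and pbc = "va # p2 @ [vb]" and ibc = "set p2" and
        pbd = "[va, t]" and ibd = "{}" and pcd = "vb # p3 @ [t]" and icd = "set p3"])
    show "distinct [s, va, vb, t]" using D by auto
    show "{s, va, vb, t} \<subseteq> V" using st Vs by auto
  qed (use pab pac pad pbc pbd pcd D Oq Ost in auto)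
qed


lemma lemA:
  assumes symE: "sym E" and noK4: "\<not> has_K4_subdivision V E"
    and notrans: "\<forall>x y. (x, y) \<in> E \<longrightarrow> x \<in> V \<longrightarrow> y \<in> V \<longrightarrow> x \<noteq> y \<longrightarrow> connected_on E (V - {x, y})"
    and st: "s \<in> V" "t \<in> V" "s \<noteq> t" and UV: "U = V - {s, t}" and CU: "C \<subseteq> U"
    and cl: "closed_in E U C"
    and Ob: "pth E U Ob" "set Ob \<inter> C = {}" "(s, hd Ob) \<in> E" "(last Ob, t) \<in> E"
    and m: "pth E C (v1 # v2 # rest)" "(s, v1) \<in> E" "(last (v1 # v2 # rest), t) \<in> E"
    and e2: "(v2, s) \<in> E"
  shows False
proof -
  define r where "r = rest @ [t]"
  have CV: "C \<subseteq> V" using CU UV by auto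
  have sC: "s \<notin> C" "t \<notin> C" using CU UV by auto
  have mC: "set (v1 # v2 # rest) \<subseteq> C" using m(1) by (simp add: pth_def)
  have mt: "pth E V (v1 # v2 # r)"
  proof -
    have "pth E V (v1 # v2 # rest)" using m(1) CV by (rule pth_mono)
    moreover have "t \<notin> set (v1 # v2 # rest)" using mC sC by blast
    ultimately have "pth E V ((v1 # v2 # rest) @ [t])" using m(3) st(2)
      unfolding pth_append by simp
    then show ?thesis by (simp add: r_def)
  qed
  have D: "distinct (v1 # v2 # r)" using mt by (simp add: pth_def)
  have rC: "set r \<subseteq> C \<union> {t}" using mC unfolding r_def by auto
  have v12: "v1 \<in> C" "v2 \<in> C" using mC by auto
  have tr: "t \<in> set r" "last r = t" by (simp_all add: r_def)
  have sr: "s \<notin> set r" using rC sC st(3) by blast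
  have v12r: "v1 \<notin> set r" "v2 \<notin> set r" "v1 \<noteq> v2" using D by auto
  have sv2: "(s, v2) \<in> E" using e2 symE by (auto simp: sym_def)
  have sv2': "s \<noteq> v2" using v12 sC by blast
  have conn2: "connected_on E (V - {s, v2})" using notrans sv2 st(1) v12 CV sv2' by blast
  have v1in: "v1 \<in> V - {s, v2}" using v12 CV sC v12r by auto
  have tin: "t \<in> V - {s, v2}" using st v12r tr by auto
  obtain R where R: "pth E (V - {s, v2}) R" "hd R = v1" "last R = t"
    using conn_pth[OF conn2 v1in tin] by blast
  obtain Q0 y where Q0: "pth E (V - {s, v2} - set r) Q0" "hd Q0 = v1" "y \<in> set r" "(last Q0, y) \<in> E"
    using first_hit[OF R(1), of "set r"] R(2,3) v12r tr by auto
  have Q0set: "set Q0 \<subseteq> V - {s, v2} - set r" using Q0(1) by (simp add: pth_def)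
  have Q0U: "pth E U Q0" using Q0(1) by (rule pth_mono) (use tr UV in auto)
  have Q0C: "set Q0 \<subseteq> C" using closed_stay[OF symE cl Q0U] Q0(2) v12 by auto
  have Q0r: "set Q0 \<inter> set r = {}" "s \<notin> set Q0" "v2 \<notin> set Q0" using Q0set by auto
  have v1Q0: "v1 \<in> set Q0" using pth_hd[OF Q0(1)] Q0(2) by simp
  have OU: "set Ob \<subseteq> U" using Ob(1) by (simp add: pth_def)
  have Obr: "set Ob \<inter> set r = {}" using OU rC Ob(2) UV by auto
  have ObQ0: "set Ob \<inter> set Q0 = {}" using Ob(2) Q0C by blast
  have Obs: "s \<notin> set Ob" "v1 \<notin> set Ob" "v2 \<notin> set Ob" using OU UV Ob(2) v12 by auto
  obtain r1 r2 where r12: "r = r1 @ y # r2" using Q0(3) split_list by metis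
  have Dr: "distinct (r1 @ y # r2)" using D r12 by simp
  have last2: "last (y # r2) = t" using tr(2) r12 by (cases r2) auto
  have pr: "pth E V (v2 # r1 @ y # r2)"
    using pth_suffix[of E V "[v1]" "v2 # r"] mt r12 by simp
  have pcd: "pth E V (v2 # r1 @ [y])"
    using pth_prefix[of E V "v2 # r1 @ [y]" r2] pr by simp
  have py: "pth E V (y # r2)"
    using pth_suffix[of E V "v2 # r1" "y # r2"] pr by simp
  have OV: "pth E V Ob" using Ob(1) by (rule pth_mono) (use UV in auto)
  have pad: "pth E V (s # Ob @ rev (y # r2))"
  proof -
    have "pth E V (rev (y # r2))" using py symE by (simp only: pth_rev)
    moreover have "hd (rev (y # r2)) = t" using last2 by (cases r2 rule: rev_cases) auto
    moreover have "set Ob \<inter> set (rev (y # r2)) = {}" using Obr r12 by auto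
    moreover have "Ob \<noteq> []" using Ob(1) by (simp add: pth_def)
    ultimately have "pth E V (Ob @ rev (y # r2))" using OV Ob(4) unfolding pth_append by simp
    moreover have "s \<notin> set (Ob @ rev (y # r2))" using Obs sr r12 by auto
    moreover have "hd (Ob @ rev (y # r2)) = hd Ob" using \<open>Ob \<noteq> []\<close> by simp
    ultimately show ?thesis using Ob(3) st(1) by (simp add: pth_Cons)
  qed
  have pbd: "pth E V (Q0 @ [y])"
  proof -
    have "pth E V Q0" using Q0(1) by (rule pth_mono) auto
    moreover have "y \<notin> set Q0" using Q0r Q0(3) by auto
    moreover have "y \<in> V" using Q0(3) rC CV st by auto
    moreover have "Q0 \<noteq> []" using Q0(1) by (simp add: pth_def)
    ultimately show ?thesis using Q0(4) unfolding pth_append by simp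
  qed
  have pab: "pth E V [s, v1]" using m(2) st v12 CV sC by (auto simp: pth_edge)
  have pac: "pth E V [s, v2]" using sv2 st v12 CV sC by (auto simp: pth_edge)
  have pbc: "pth E V [v1, v2]" using pth_prefix[of E V "[v1, v2]" r] mt by simp
  have yV: "y \<in> V" using Q0(3) rC CV st by auto
  have ys: "y \<noteq> s" "y \<noteq> v1" "y \<noteq> v2" using Q0(3) sr v12r by auto
  have lastQ0: "last (Q0 @ [y]) = y" by simp
  show False
  proof (rule notE[OF noK4], rule K4_generic[where a = s and b = v1 and c = v2 and d = y and
        pab = "[s, v1]" and iab = "{}" and pac = "[s, v2]" and iac = "{}" and
        pad = "s # Ob @ rev (y # r2)" and iad = "set Ob \<union> set r2" and pbc = "[v1, v2]" and ibc = "{}" and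
        pbd = "Q0 @ [y]" and ibd = "set Q0 - {v1}" and pcd = "v2 # r1 @ [y]" and icd = "set r1"])
    show "distinct [s, v1, v2, y]" using ys v12 sC v12r by auto
    show "{s, v1, v2, y} \<subseteq> V" using st yV v12 CV by auto
    show "set (s # Ob @ rev (y # r2)) \<subseteq> {s, y} \<union> (set Ob \<union> set r2)" by auto
    show "set (Q0 @ [y]) \<subseteq> {v1, y} \<union> (set Q0 - {v1})" by auto
    show "set (v2 # r1 @ [y]) \<subseteq> {v2, y} \<union> set r1" by auto
    show "(set Ob \<union> set r2) \<inter> (set Q0 - {v1}) = {}" using ObQ0 Q0r r12 by auto
    show "(set Ob \<union> set r2) \<inter> set r1 = {}" using Obr Dr r12 by auto
    show "(set Q0 - {v1}) \<inter> set r1 = {}" using Q0r r12 by auto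
    show "(set Ob \<union> set r2) \<inter> {s, v1, v2, y} = {}" using Obs Obr Q0(3) sr v12r Dr r12 by auto
    show "(set Q0 - {v1}) \<inter> {s, v1, v2, y} = {}" using Q0r Q0(3) by auto
    show "set r1 \<inter> {s, v1, v2, y} = {}" using sr v12r Dr r12 by auto
    show "hd (Q0 @ [y]) = v1" using Q0(2) \<open>v1 \<in> set Q0\<close> by (cases Q0) auto
  qed (use pab pac pad pbc pbd pcd in auto)
qed


lemma lemA_rev:
  assumes symE: "sym E" and noK4: "\<not> has_K4_subdivision V E"
    and notrans: "\<forall>x y. (x, y) \<in> E \<longrightarrow> x \<in> V \<longrightarrow> y \<in> V \<longrightarrow> x \<noteq> y \<longrightarrow> connected_on E (V - {x, y})"
    and st: "s \<in> V" "t \<in> V" "s \<noteq> t" and UV: "U = V - {s, t}" and CU: "C \<subseteq> U"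
    and cl: "closed_in E U C"
    and Ob: "pth E U Ob" "set Ob \<inter> C = {}" "(s, hd Ob) \<in> E" "(last Ob, t) \<in> E"
    and m: "pth E C m" "(s, hd m) \<in> E" "(last m, t) \<in> E" "rev m = w1 # w2 # rest"
    and e2: "(w2, t) \<in> E"
  shows False
proof -
  have mne: "m \<noteq> []" using m(1) by (simp add: pth_def)
  have Obne: "Ob \<noteq> []" using Ob(1) by (simp add: pth_def)
  show False
  proof (rule lemA[OF symE noK4 notrans st(2,1) st(3)[symmetric] _ CU cl, of "rev Ob" w1 w2 rest])
    show "U = V - {t, s}" using UV by auto
    show "pth E U (rev Ob)" using Ob(1) symE by (simp add: pth_rev)
    show "set (rev Ob) \<inter> C = {}" using Ob(2) by simp
    show "(t, hd (rev Ob)) \<in> E" using Ob(4) symE Obne by (simp add: hd_rev sym_def)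
    show "(last (rev Ob), s) \<in> E" using Ob(3) symE Obne by (simp add: last_rev sym_def)
    show "pth E C (w1 # w2 # rest)" using m(1,4) symE by (metis pth_rev)
    have "hd (rev m) = last m" using mne by (simp add: hd_rev)
    then show "(t, w1) \<in> E" using m(3,4) symE by (simp add: sym_def)
    have "last (rev m) = hd m" using mne by (simp add: last_rev)
    then show "(last (w1 # w2 # rest), s) \<in> E" using m(2,4) symE by (simp add: sym_def del: last.simps)
    show "(w2, t) \<in> E" by (rule e2)
  qed
qed

lemma join_fan:
  assumes symE: "sym E" and P: "pth E U P" and Q: "pth E U Q" "hd P = x" "hd Q = x" "set P \<inter> set Q = {x}"
  shows "pth E U (rev P @ tl Q) \<and> hd (rev P @ tl Q) = last P \<and> last (rev P @ tl Q) = last Q \<and>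
         set (rev P @ tl Q) = set P \<union> set Q \<and> length (rev P @ tl Q) = length P + length Q - 1"
proof -
  obtain Q' where QQ: "Q = x # Q'" using Q(1,3) by (cases Q) (auto simp: pth_def)
  have Pne: "P \<noteq> []" using P by (simp add: pth_def)
  have xP: "x \<in> set P" using pth_hd[OF P] Q(2) by simp
  show ?thesis
  proof (cases "Q' = []")
    case True
    then show ?thesis using P symE Pne xP QQ Q(2)
      by (simp add: pth_rev hd_rev last_rev insert_absorb)
  next
    case False
    have pQ': "pth E U Q'" using pth_suffix[of E U "[x]" Q'] Q(1) QQ False by simp
    have xQ': "x \<notin> set Q'" using Q(1) QQ by (simp add: pth_def)
    have dis: "set (rev P) \<inter> set Q' = {}" using Q(4) QQ xQ' by auto
    have e: "(last (rev P), hd Q') \<in> E"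
      using Q(1) QQ False Pne Q(2) by (simp add: pth_Cons last_rev)
    have "pth E U (rev P @ Q')" using pQ' P symE dis e Pne unfolding pth_append by (simp add: pth_rev)
    moreover have "set (rev P @ Q') = set P \<union> set Q" using QQ xP by auto
    ultimately show ?thesis using QQ False Pne by (simp add: hd_rev)
  qed
qed

lemma fan_path:
  assumes symE: "sym E" and f: "fan E U s t x" and cl: "closed_in E U C"
  shows "\<exists>m. pth E U m \<and> (s, hd m) \<in> E \<and> (last m, t) \<in> E \<and> (\<forall>z\<in>set m. z \<in> C \<longleftrightarrow> x \<in> C) \<and>
             ((x, s) \<notin> E \<longrightarrow> (x, t) \<notin> E \<longrightarrow> length m \<ge> 3)"
proof -
  obtain P Q where PQ: "pth E U P" "pth E U Q" "hd P = x" "hd Q = x" "(last P, s) \<in> E" "(last Q, t) \<in> E"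
    "set P \<inter> set Q = {x}" using f unfolding fan_def by blast
  note J = join_fan[OF symE PQ(1,2,3,4,7)]
  define m where "m = rev P @ tl Q"
  have "(s, hd m) \<in> E" using J PQ(5) symE unfolding m_def by (simp add: sym_def)
  moreover have "(last m, t) \<in> E" using J PQ(6) unfolding m_def by simp
  moreover have "\<forall>z\<in>set m. z \<in> C \<longleftrightarrow> x \<in> C"
    using J closed_stay[OF symE cl PQ(1)] closed_stay[OF symE cl PQ(2)] PQ(3,4) unfolding m_def by auto
  moreover have "length m \<ge> 3" if "(x, s) \<notin> E" "(x, t) \<notin> E"
  proof -
    have "length P \<ge> 2"
    proof (rule ccontr)
      assume "\<not> length P \<ge> 2"
      moreover have "P \<noteq> []" using PQ(1) by (simp add: pth_def)
      ultimately have "P = [hd P]" by (cases P) (auto simp: Suc_le_eq)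
      then have "last P = hd P" by (metis last.simps)
      then show False using PQ(3,5) that(1) by simp
    qed
    moreover have "length Q \<ge> 2"
    proof (rule ccontr)
      assume "\<not> length Q \<ge> 2"
      moreover have "Q \<noteq> []" using PQ(2) by (simp add: pth_def)
      ultimately have "Q = [hd Q]" by (cases Q) (auto simp: Suc_le_eq)
      then have "last Q = hd Q" by (metis last.simps)
      then show False using PQ(4,6) that(2) by simp
    qed
    ultimately show ?thesis using J unfolding m_def by simp
  qed
  ultimately show ?thesis using J unfolding m_def by blast
qed


lemma pth_mono_E: "pth F S p \<Longrightarrow> F \<subseteq> E \<Longrightarrow> pth E S p"
  unfolding pth_def by (auto elim!: successively_mono)

lemma pth_split_ends:
  assumes "pth E S p" "hd p = s" "last p = t" "s \<noteq> t"
  shows "\<exists>m. p = s # m @ [t]"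
proof -
  obtain p' where p: "p = s # p'" using assms(1,2) by (cases p) (auto simp: pth_def)
  then have "p' \<noteq> []" using assms(3,4) by auto
  then obtain m where "p' = m @ [last p']" by (metis append_butlast_last_id)
  then show ?thesis using p assms(3) \<open>p' \<noteq> []\<close> by (metis last_ConsR)
qed

theorem mainTheorem7:
  fixes V :: "'a set" and E :: "('a \<times> 'a) set" and s t :: 'a and W :: "'a set"
  assumes "series_parallel V E"
    and "\<forall>x y. \<not> transitive_edge V E x y"
    and "separation_pair V E s t"
    and "component V E s t W"
  shows "heavy E s t W \<longleftrightarrow> longest_path_length (E \<inter> (W \<times> W)) W s t \<ge> 4"
proof -
  have G: "graph V E" "connected_on E V" "\<forall>v\<in>V. connected_on E (V - {v})"
    and noK4: "\<not> has_K4_subdivision V E"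
    using assms(1) unfolding series_parallel_def biconnected_def by auto
  have finV: "finite V" and EV: "E \<subseteq> V \<times> V" and symE: "sym E"
    using G(1) unfolding graph_def by auto
  have st: "s \<in> V" "t \<in> V" "s \<noteq> t" and nc: "\<not> connected_on E (V - {s, t})"
    using assms(3) unfolding separation_pair_def by auto
  obtain C where C: "conn_component E (V - {s, t}) C" and WC: "W = {s, t} \<union> C"
    using assms(4) unfolding component_def by blast
  define U where "U = V - {s, t}"
  have CU: "C \<subseteq> U" and Cne: "C \<noteq> {}" and connC: "connected_on E C" and cl: "closed_in E U C"
    using C unfolding conn_component_def closed_in_def U_def by auto
  have notrans: "\<forall>x y. (x, y) \<in> E \<longrightarrow> x \<in> V \<longrightarrow> y \<in> V \<longrightarrow> x \<noteq> y \<longrightarrow> connected_on E (V - {x, y})"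
    using assms(2) unfolding transitive_edge_def separation_pair_def by blast
  have fanU: "fan E U s t x" if "x \<in> U" for x
  proof -
    have xV: "x \<in> V" using that U_def by auto
    obtain R where R: "pth E V R" "hd R = x" "last R = s" using conn_pth[OF G(2) xV st(1)] by blast
    have h1: "hd R \<notin> {s, t}" using R(2) that U_def by auto
    have h2: "last R \<in> {s, t}" using R(3) by simp
    obtain Q y where Q: "pth E (V - {s, t}) Q" "hd Q = hd R" "y \<in> {s, t}" "(last Q, y) \<in> E"
      using first_hit[OF R(1) h1 h2] by blast
    have "fan E U s t (hd Q)"
      using fan_exists[OF symE G(3) st U_def, of Q] Q(1,3,4) U_def by auto
    then show ?thesis using Q(2) R(2) by simp
  qed
  have WV: "W \<subseteq> V" using WC CU U_def st by auto
  have finW: "finite W" using finV WV finite_subset by blast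
  define S where "S = {length p - 1 | p. path_in (E \<inter> W \<times> W) W p \<and> hd p = s \<and> last p = t}"
  have LS: "longest_path_length (E \<inter> (W \<times> W)) W s t = Max S"
    unfolding longest_path_length_def S_def by simp
  have finS: "finite S"
  proof -
    have "S \<subseteq> {..card W}"
    proof
      fix n assume "n \<in> S"
      then obtain p where p: "n = length p - 1" "path_in (E \<inter> W \<times> W) W p" unfolding S_def by blast
      then have "distinct p" "set p \<subseteq> W" unfolding path_in_def by auto
      then have "length p \<le> card W" using finW by (metis card_mono distinct_card)
      then show "n \<in> {..card W}" using p(1) by simp
    qed
    then show ?thesis using finite_subset by blast
  qed
  have inS: "\<exists>n\<in>S. ((x, s) \<notin> E \<longrightarrow> (x, t) \<notin> E \<longrightarrow> n \<ge> 4)" if xC: "x \<in> C" for x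
  proof -
    obtain m where m: "pth E U m" "(s, hd m) \<in> E" "(last m, t) \<in> E" "\<forall>z\<in>set m. z \<in> C \<longleftrightarrow> x \<in> C"
      "(x, s) \<notin> E \<longrightarrow> (x, t) \<notin> E \<longrightarrow> length m \<ge> 3"
      using fan_path[OF symE fanU[of x] cl] xC CU by blast
    have p: "pth E V (s # m @ [t])" using pth_wrap[OF m(1) _ _ st(3) m(2,3)] U_def st by auto
    have "set (s # m @ [t]) \<subseteq> W" using m(4) xC WC by auto
    then have "pth E W (s # m @ [t])" using p unfolding pth_def by auto
    then have "path_in (E \<inter> W \<times> W) W (s # m @ [t])" by (simp add: path_in_pth pth_restrict)
    then have "length (s # m @ [t]) - 1 \<in> S" unfolding S_def by force
    moreover have "(x, s) \<notin> E \<longrightarrow> (x, t) \<notin> E \<longrightarrow> 4 \<le> length (s # m @ [t]) - 1" using m(5) by simp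
    ultimately show ?thesis by blast
  qed
  show ?thesis
  proof
    assume "heavy E s t W"
    then obtain v where v: "v \<in> W - {s, t}" "(v, s) \<notin> E" "(v, t) \<notin> E" unfolding heavy_def by blast
    have "v \<in> C" using v(1) WC by auto
    then obtain n where "n \<in> S" "n \<ge> 4" using inS v(2,3) by blast
    then show "longest_path_length (E \<inter> (W \<times> W)) W s t \<ge> 4" unfolding LS
      using finS Max_ge le_trans by blast
  next
    assume L: "longest_path_length (E \<inter> (W \<times> W)) W s t \<ge> 4"
    show "heavy E s t W"
    proof (rule ccontr)
      assume nh: "\<not> heavy E s t W"
      then have light: "\<forall>v\<in>C. (v, s) \<in> E \<or> (v, t) \<in> E" unfolding heavy_def WC using CU U_def by auto
      obtain c where "c \<in> C" using Cne by blast
      then have "S \<noteq> {}" using inS by blast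
      then have "Max S \<in> S" using finS Max_in by blast
      then obtain p where p: "path_in (E \<inter> W \<times> W) W p" "hd p = s" "last p = t" "length p - 1 \<ge> 4"
        using L unfolding LS S_def by auto
      have pW: "pth E W p" using p(1) unfolding path_in_pth by (rule pth_mono_E) auto
      obtain m where pm: "p = s # m @ [t]" using pth_split_ends[OF pW p(2,3) st(3)] by blast
      have Dp: "distinct (s # m @ [t])" using pW pm by (simp add: pth_def)
      have mC: "set m \<subseteq> C" using pW pm Dp WC unfolding pth_def by auto
      have mlen: "length m \<ge> 3" using p(4) pm by simp
      have pV: "pth E V (s # m @ [t])" using pW pm WV by (metis pth_mono)
      have mne: "m \<noteq> []" using mlen by auto
      have pmC: "pth E C m"
      proof -
        have "pth E V m" using pth_mid[of E V "[s]" m "[t]"] pV mne by simp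
        then show ?thesis using mC unfolding pth_def by auto
      qed
      have ms: "(s, hd m) \<in> E" using pV mne by (simp add: pth_Cons pth_append)
      have mt: "(last m, t) \<in> E" using pth_join[of E V "s # m" "[t]"] pV mne by simp
      obtain x where xU: "x \<in> U" "x \<notin> C"
      proof -
        from nc obtain a b where ab: "a \<in> U" "b \<in> U" "\<not> (\<exists>q. path_in E U q \<and> hd q = a \<and> last q = b)"
          unfolding connected_on_def U_def by blast
        have "\<not> (a \<in> C \<and> b \<in> C)"
        proof
          assume "a \<in> C \<and> b \<in> C"
          then obtain q where "pth E C q" "hd q = a" "last q = b" using conn_pth[OF connC] by blast
          then show False using ab(3) CU pth_mono[of E C q U] by (auto simp: path_in_pth)
        qed
        then show ?thesis using that ab by blast
      qed
      obtain Ob where Ob: "pth E U Ob" "(s, hd Ob) \<in> E" "(last Ob, t) \<in> E" "\<forall>z\<in>set Ob. z \<in> C \<longleftrightarrow> x \<in> C"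
        using fan_path[OF symE fanU[OF xU(1)] cl] by blast
      have ObC: "set Ob \<inter> C = {}" using Ob(4) xU(2) by blast
      note A = lemA[OF symE noK4 notrans st U_def CU cl Ob(1) ObC Ob(2,3)]
      note Ar = lemA_rev[OF symE noK4 notrans st U_def CU cl Ob(1) ObC Ob(2,3) pmC ms mt]
      obtain v1 v2 rest where m3: "m = v1 # v2 # rest" "rest \<noteq> []"
      proof -
        obtain v1 r' where r1: "m = v1 # r'" using mne by (cases m) auto
        then obtain v2 rest where r2: "r' = v2 # rest" using mlen by (cases r') auto
        have "rest \<noteq> []" using mlen r1 r2 by auto
        then show thesis using that r1 r2 by blast
      qed
      obtain rest0 vk where rk: "rest = rest0 @ [vk]" using m3(2) by (metis append_butlast_last_id)
      have v2C: "v2 \<in> C" using mC m3 by auto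
      show False
      proof (cases "(v2, s) \<in> E")
        case True
        then show False using A[of v1 v2 rest] pmC ms mt m3 by simp
      next
        case v2s: False
        then have v2t: "(v2, t) \<in> E" using light v2C by blast
        show False
        proof (cases "rest0 = []")
          case True
          then have "rev m = vk # v2 # [v1]" using m3 rk by simp
          then show False using Ar v2t by blast
        next
          case False
          then obtain m3' u where r0: "rest0 = m3' @ [u]" by (metis append_butlast_last_id)
          have uC: "u \<in> C" using mC m3 rk r0 by auto
          show False
          proof (cases "(u, t) \<in> E")
            case True
            have "rev m = vk # u # (rev m3' @ [v2, v1])" using m3 rk r0 by simp
            then show False using Ar True by blast
          next
            case ut: False
            then have us: "(u, s) \<in> E" using light uC by blast
            have q: "pth E V (s # [v1] @ v2 # m3' @ u # [vk] @ [t])" using pV m3 rk r0 by simp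
            have qC: "set ([v1] @ v2 # m3' @ u # [vk]) \<subseteq> C" using mC m3 rk r0 by simp
            show False using crossing[OF symE noK4 st U_def CU Ob(1) ObC Ob(2,3) q qC v2t us] .
          qed
        qed
      qed
    qed
  qed
qed

end
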